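(* Let $(X_n)_{n\ge 0}$ be a time-homogeneous Markov chain on a measurable state space $\Omega$, let $S\subset\Omega$ be a measurable set, let $\tau=\min\{n\ge 0: X_n\notin S\}$, and let $\nu$ be a quasistationary distribution (QSD) of the chain in $S$. Fix integers $N\ge 1$ and $T_{\rm poll}\ge 1$. Let $(X^1_n)_{n\ge0},\dots,(X^N_n)_{n\ge0}$ be $N$ independent copies of the Markov chain (same transition kernel) whose initial positions $X^1_0,\dots,X^N_0$ are i.i.d. with law exactly $\nu$, and let $\tau^j=\min\{n\ge0: X^j_n\notin S\}$. Define $$M=\min\{m\ge 1:\ \exists\, j\in\{1,\dots,N\}\text{ with } \tau^j\le mT_{\rm poll}\},\qquad K=\min\{j\in\{1,\dots,N\}:\ \tau^j\le MT_{\rm poll}\},$$ and $$X_{\rm acc}=X^K_{\tau^K},\qquad T_{\rm acc}=(N-1)(M-1)T_{\rm poll}+(K-1)T_{\rm poll}+\tau^K .$$ (That is, the replicas are run synchronously in blocks of $T_{\rm poll}$ steps until some replica leaves $S$ during a block; $K$ is the smallest index of a replica leaving $S$ during that block.) Then $(X_{\rm acc},T_{\rm acc})$ has the same law as $(X_\tau,\tau)$, where $(X_n)_{n\ge 0}$ is the Markov chain started from $X_0\sim\nu$.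
   Context: A probability measure $\nu$ with support in $S$ is a quasistationary distribution (QSD) in $S$ if for every measurable $A\subset S$ and every $n\in\mathbb N$, $\nu(A)=\mathbb P^\nu(X_n\in A\mid \tau>n)$, where $\mathbb P^\nu$ denotes the law of the chain started from $X_0\sim\nu$ and $\tau=\min\{n\ge0: X_n\notin S\}$ is the first exit time from $S$. *)

theory Defs
  imports "HOL-Probability.Probability"
begin

definition exit_time :: "'a set \<Rightarrow> (nat \<Rightarrow> 'a) \<Rightarrow> enat" where
  "exit_time S x = (if \<exists>n. x n \<notin> S then enat (LEAST n. x n \<notin> S) else \<infinity>)"

text \<open>A time-homogeneous Markov chain X on the probability space P with state space Omega
  and (probability) transition kernel kern: for every n, conditionally on the natural
  filtration at time n, X (n+1) has law kern (X n).  Written out on the generating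
  cylinder sets of that filtration.\<close>
definition markov_chain ::
  "'b measure \<Rightarrow> 'a measure \<Rightarrow> ('a \<Rightarrow> 'a measure) \<Rightarrow> (nat \<Rightarrow> 'b \<Rightarrow> 'a) \<Rightarrow> bool" where
  "markov_chain P \<Omega> kern X \<longleftrightarrow>
     prob_space P \<and> kern \<in> \<Omega> \<rightarrow>\<^sub>M prob_algebra \<Omega> \<and> (\<forall>n. X n \<in> P \<rightarrow>\<^sub>M \<Omega>) \<and>
     (\<forall>n A. (\<forall>i\<le>Suc n. A i \<in> sets \<Omega>) \<longrightarrow>
        measure P {\<omega>\<in>space P. \<forall>i\<le>Suc n. X i \<omega> \<in> A i} =
        (\<integral>\<omega>. indicator {\<omega>\<in>space P. \<forall>i\<le>n. X i \<omega> \<in> A i} \<omega> *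
               measure (kern (X n \<omega>)) (A (Suc n)) \<partial>P))"

text \<open>nu is a quasistationary distribution in S for the chain X (defined on Q, started
  from X 0 ~ nu, so that Q realizes the law P^nu).\<close>
definition qsd ::
  "'b measure \<Rightarrow> 'a measure \<Rightarrow> (nat \<Rightarrow> 'b \<Rightarrow> 'a) \<Rightarrow> 'a set \<Rightarrow> 'a measure \<Rightarrow> bool" where
  "qsd Q \<Omega> X S \<nu> \<longleftrightarrow>
     prob_space \<nu> \<and> sets \<nu> = sets \<Omega> \<and> S \<in> sets \<Omega> \<and> measure \<nu> S = 1 \<and>
     distr Q \<Omega> (X 0) = \<nu> \<and>
     (\<forall>A n. A \<in> sets \<Omega> \<longrightarrow> A \<subseteq> S \<longrightarrow>
        measure \<nu> A =
          measure Q {\<omega>\<in>space Q. X n \<omega> \<in> A \<and> exit_time S (\<lambda>k. X k \<omega>) > enat n}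
          / measure Q {\<omega>\<in>space Q. exit_time S (\<lambda>k. X k \<omega>) > enat n})"

text \<open>Polling index M and accepted replica index K, given the exit times taus of the
  replicas 1..N (only meaningful when some tau j is finite).\<close>
definition poll_M :: "nat \<Rightarrow> nat \<Rightarrow> (nat \<Rightarrow> enat) \<Rightarrow> nat" where
  "poll_M N Tpoll taus = (LEAST m. m \<ge> 1 \<and> (\<exists>j\<in>{1..N}. taus j \<le> enat (m * Tpoll)))"

definition poll_K :: "nat \<Rightarrow> nat \<Rightarrow> (nat \<Rightarrow> enat) \<Rightarrow> nat" where
  "poll_K N Tpoll taus = (LEAST j. j \<in> {1..N} \<and> taus j \<le> enat (poll_M N Tpoll taus * Tpoll))"

definition T_acc :: "nat \<Rightarrow> nat \<Rightarrow> (nat \<Rightarrow> enat) \<Rightarrow> nat" where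
  "T_acc N Tpoll taus =
     (let M = poll_M N Tpoll taus; K = poll_K N Tpoll taus in
      (N - 1) * (M - 1) * Tpoll + (K - 1) * Tpoll + the_enat (taus K))"

definition X_acc :: "nat \<Rightarrow> nat \<Rightarrow> (nat \<Rightarrow> enat) \<Rightarrow> (nat \<Rightarrow> nat \<Rightarrow> 'a) \<Rightarrow> 'a" where
  "X_acc N Tpoll taus xs = (let K = poll_K N Tpoll taus in xs K (the_enat (taus K)))"

end

theory Submission
  imports Defs
begin

definition cyl :: "'b measure \<Rightarrow> (nat \<Rightarrow> 'b \<Rightarrow> 'a) \<Rightarrow> nat \<Rightarrow> (nat \<Rightarrow> 'a set) \<Rightarrow> 'b set" where
  "cyl P X n A = {\<omega>\<in>space P. \<forall>i\<le>n. X i \<omega> \<in> A i}"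

lemma mc_facts:
  assumes "markov_chain P \<Omega> kern X"
  shows "prob_space P" "kern \<in> \<Omega> \<rightarrow>\<^sub>M prob_algebra \<Omega>" "\<And>n. X n \<in> P \<rightarrow>\<^sub>M \<Omega>"
  using assms unfolding markov_chain_def by auto

lemma cyl_sets:
  assumes "markov_chain P \<Omega> kern X" "\<And>i. A i \<in> sets \<Omega>"
  shows "cyl P X n A \<in> sets P"
proof -
  note [measurable] = mc_facts(3)[OF assms(1)] assms(2)
  show ?thesis unfolding cyl_def by measurable
qed

lemma pe: "prob_space M \<Longrightarrow> emeasure M A = ennreal (measure M A)"
  using finite_measure.emeasure_eq_measure prob_space_def by blast

lemma kern_prob:
  assumes "markov_chain P \<Omega> kern X" "x \<in> space \<Omega>"
  shows "prob_space (kern x)" "sets (kern x) = sets \<Omega>"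
  using measurable_space[OF mc_facts(2)[OF assms(1)] assms(2)] by (auto simp: space_prob_algebra)

lemma markov_step:
  assumes mc: "markov_chain P \<Omega> kern X" and A: "\<And>i. A i \<in> sets \<Omega>"
    and h[measurable]: "h \<in> borel_measurable \<Omega>"
  shows "(\<integral>\<^sup>+\<omega>. indicator (cyl P X n A) \<omega> * h (X (Suc n) \<omega>) \<partial>P)
       = (\<integral>\<^sup>+\<omega>. indicator (cyl P X n A) \<omega> * (\<integral>\<^sup>+y. h y \<partial>kern (X n \<omega>)) \<partial>P)"
proof -
  interpret prob_space P using mc_facts(1)[OF mc] .
  note Xm[measurable] = mc_facts(3)[OF mc]
  note km[measurable] = mc_facts(2)[OF mc]
  have km': "kern \<in> \<Omega> \<rightarrow>\<^sub>M subprob_algebra \<Omega>" using km by (rule measurable_prob_algebraD)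
  define I where "I = cyl P X n A"
  have I[measurable]: "I \<in> sets P" unfolding I_def using cyl_sets[OF mc A] .
  define D' where "D' = density P (indicator I)"
  have sD: "sets D' = sets P" "space D' = space P" unfolding D'_def by auto
  have ne: "space D' \<noteq> {}" using sD not_empty by auto
  have KX: "(\<lambda>\<omega>. kern (X n \<omega>)) \<in> D' \<rightarrow>\<^sub>M subprob_algebra \<Omega>"
    using measurable_compose[OF Xm[of n] km'] by (simp add: D'_def measurable_cong_sets[OF sD(1) refl])
  have XS: "X (Suc n) \<in> D' \<rightarrow>\<^sub>M \<Omega>" using Xm[of "Suc n"] by (simp add: D'_def)
  define \<mu>1 where "\<mu>1 = distr D' \<Omega> (X (Suc n))"
  define \<mu>2 where "\<mu>2 = D' \<bind> (\<lambda>\<omega>. kern (X n \<omega>))"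
  have L: "integral\<^sup>N \<mu>1 g = (\<integral>\<^sup>+\<omega>. indicator I \<omega> * g (X (Suc n) \<omega>) \<partial>P)"
    if g[measurable]: "g \<in> borel_measurable \<Omega>" for g
    unfolding \<mu>1_def
    apply (subst nn_integral_distr[OF XS]) apply simp
    unfolding D'_def by (subst nn_integral_density) auto
  have R: "integral\<^sup>N \<mu>2 g = (\<integral>\<^sup>+\<omega>. indicator I \<omega> * (\<integral>\<^sup>+y. g y \<partial>kern (X n \<omega>)) \<partial>P)"
    if g[measurable]: "g \<in> borel_measurable \<Omega>" for g
  proof -
    have "integral\<^sup>N \<mu>2 g = (\<integral>\<^sup>+\<omega>. (\<integral>\<^sup>+y. g y \<partial>kern (X n \<omega>)) \<partial>D')"
      unfolding \<mu>2_def by (rule nn_integral_bind[OF g KX])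
    also have "\<dots> = (\<integral>\<^sup>+\<omega>. indicator I \<omega> * (\<integral>\<^sup>+y. g y \<partial>kern (X n \<omega>)) \<partial>P)"
      unfolding D'_def
      by (subst nn_integral_density)
         (auto intro!: measurable_compose[OF measurable_compose[OF Xm[of n] km'] nn_integral_measurable_subprob_algebra[OF g]])
    finally show ?thesis .
  qed
  have eq: "\<mu>1 = \<mu>2"
  proof (rule measure_eqI)
    have "sets \<mu>2 = sets \<Omega>" unfolding \<mu>2_def
      by (rule sets_bind[OF _ ne]) (use kern_prob(2)[OF mc] measurable_space[OF Xm] sD in auto)
    then show "sets \<mu>1 = sets \<mu>2" unfolding \<mu>1_def by simp
    fix D assume "D \<in> sets \<mu>1"
    then have D[measurable]: "D \<in> sets \<Omega>" unfolding \<mu>1_def by simp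
    define A' where "A' = A(Suc n := D)"
    have A': "\<And>i. A' i \<in> sets \<Omega>" using A D by (simp add: A'_def)
    have "emeasure \<mu>1 D = integral\<^sup>N \<mu>1 (indicator D)"
      by (simp add: \<mu>1_def)
    also have "\<dots> = (\<integral>\<^sup>+\<omega>. indicator (cyl P X (Suc n) A') \<omega> \<partial>P)"
    proof -
      have "\<And>\<omega>. indicator I \<omega> * indicator D (X (Suc n) \<omega>) = (indicator (cyl P X (Suc n) A') \<omega> :: ennreal)"
        unfolding I_def cyl_def A'_def indicator_def by (auto simp: le_Suc_eq)
      then show ?thesis using L[of "indicator D"] by simp
    qed
    also have "\<dots> = ennreal (measure P (cyl P X (Suc n) A'))"
      using cyl_sets[OF mc A'] by (simp add: emeasure_eq_measure)
    also have "measure P (cyl P X (Suc n) A') =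
        (\<integral>\<omega>. indicator I \<omega> * measure (kern (X n \<omega>)) D \<partial>P)"
    proof -
      have mk: "\<forall>n A. (\<forall>i\<le>Suc n. A i \<in> sets \<Omega>) \<longrightarrow>
        measure P {\<omega>\<in>space P. \<forall>i\<le>Suc n. X i \<omega> \<in> A i} =
        (\<integral>\<omega>. indicator {\<omega>\<in>space P. \<forall>i\<le>n. X i \<omega> \<in> A i} \<omega> *
               measure (kern (X n \<omega>)) (A (Suc n)) \<partial>P)" using mc unfolding markov_chain_def by blast
      have e1: "{\<omega>\<in>space P. \<forall>i\<le>n. X i \<omega> \<in> A' i} = I" by (auto simp: A'_def I_def cyl_def)
      have e2: "A' (Suc n) = D" by (simp add: A'_def)
      show ?thesis using mk[rule_format, of n A'] A' unfolding e1 e2 cyl_def by blast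
    qed
    also have "ennreal \<dots> = (\<integral>\<^sup>+\<omega>. indicator I \<omega> * measure (kern (X n \<omega>)) D \<partial>P)"
    proof (rule nn_integral_eq_integral[symmetric])
      have m: "(\<lambda>\<omega>. indicator I \<omega> * measure (kern (X n \<omega>)) D) \<in> borel_measurable P"
        by measurable
      show "integrable P (\<lambda>\<omega>. indicator I \<omega> * measure (kern (X n \<omega>)) D)"
      proof (rule integrable_const_bound[where B=1, OF _ m], rule AE_I2)
        fix x assume x: "x \<in> space P"
        have ps: "prob_space (kern (X n x))" using kern_prob(1)[OF mc measurable_space[OF Xm x]] .
        have "measure (kern (X n x)) D \<le> 1" by (rule prob_space.prob_le_1[OF ps])
        then show "norm (indicator I x * measure (kern (X n x)) D) \<le> 1" by (auto simp: indicator_def)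
      qed
      show "AE x in P. 0 \<le> indicator I x * measure (kern (X n x)) D" by simp
    qed
    also have "\<dots> = (\<integral>\<^sup>+\<omega>. indicator I \<omega> * emeasure (kern (X n \<omega>)) D \<partial>P)"
      by (intro nn_integral_cong)
         (simp add: ennreal_mult indicator_def pe kern_prob[OF mc] measurable_space[OF Xm])
    also have "\<dots> = integral\<^sup>N \<mu>2 (indicator D)"
    proof -
      have "\<And>\<omega>. \<omega> \<in> space P \<Longrightarrow> (\<integral>\<^sup>+y. indicator D y \<partial>kern (X n \<omega>)) = emeasure (kern (X n \<omega>)) D"
        by (rule nn_integral_indicator) (simp add: kern_prob(2)[OF mc measurable_space[OF Xm]])
      then show ?thesis using R[of "indicator D"] by (auto intro!: nn_integral_cong)
    qed
    also have "\<dots> = emeasure \<mu>2 D"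
      using \<open>sets \<mu>2 = sets \<Omega>\<close> by simp
    finally show "emeasure \<mu>1 D = emeasure \<mu>2 D" .
  qed
  show ?thesis using L[OF h] R[OF h] eq unfolding I_def by simp
qed

definition stp :: "('a \<Rightarrow> 'a measure) \<Rightarrow> 'a set \<Rightarrow> ('a \<Rightarrow> ennreal) \<Rightarrow> 'a \<Rightarrow> ennreal" where
  "stp kern C f x = (\<integral>\<^sup>+y. indicator C y * f y \<partial>kern x)"

primrec Ek :: "('a \<Rightarrow> 'a measure) \<Rightarrow> (nat \<Rightarrow> 'a set) \<Rightarrow> nat \<Rightarrow> ('a \<Rightarrow> ennreal) \<Rightarrow> 'a \<Rightarrow> ennreal" where
  "Ek kern A 0 f = f"
| "Ek kern A (Suc k) f = Ek kern A k (stp kern (A (Suc k)) f)"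

definition Phi :: "'b measure \<Rightarrow> (nat \<Rightarrow> 'b \<Rightarrow> 'a) \<Rightarrow> nat \<Rightarrow> (nat \<Rightarrow> 'a set) \<Rightarrow> ('a \<Rightarrow> ennreal) \<Rightarrow> ennreal" where
  "Phi P X n A f = (\<integral>\<^sup>+\<omega>. indicator (cyl P X n A) \<omega> * f (X n \<omega>) \<partial>P)"

lemma stp_meas:
  assumes mc: "markov_chain P \<Omega> kern X" and C: "C \<in> sets \<Omega>" and f[measurable]: "f \<in> borel_measurable \<Omega>"
  shows "stp kern C f \<in> borel_measurable \<Omega>"
proof -
  have km': "kern \<in> \<Omega> \<rightarrow>\<^sub>M subprob_algebra \<Omega>" using mc_facts(2)[OF mc] by (rule measurable_prob_algebraD)
  have h: "(\<lambda>y. indicator C y * f y) \<in> borel_measurable \<Omega>" using C by measurable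
  show ?thesis unfolding stp_def
    by (rule measurable_compose[OF km' nn_integral_measurable_subprob_algebra[OF h]])
qed

lemma Ek_meas:
  assumes mc: "markov_chain P \<Omega> kern X" and A: "\<And>i. A i \<in> sets \<Omega>"
  shows "f \<in> borel_measurable \<Omega> \<Longrightarrow> Ek kern A k f \<in> borel_measurable \<Omega>"
  by (induction k arbitrary: f) (auto intro: stp_meas[OF mc A])

lemma Phi_step:
  assumes mc: "markov_chain P \<Omega> kern X" and A: "\<And>i. A i \<in> sets \<Omega>"
    and f[measurable]: "f \<in> borel_measurable \<Omega>"
  shows "Phi P X (Suc n) A f = Phi P X n A (stp kern (A (Suc n)) f)"
proof -
  have C[measurable]: "A (Suc n) \<in> sets \<Omega>" using A .
  have h: "(\<lambda>y. indicator (A (Suc n)) y * f y) \<in> borel_measurable \<Omega>" by measurable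
  have "\<And>\<omega>. indicator (cyl P X (Suc n) A) \<omega> * f (X (Suc n) \<omega>) =
     indicator (cyl P X n A) \<omega> * (indicator (A (Suc n)) (X (Suc n) \<omega>) * f (X (Suc n) \<omega>))"
    unfolding cyl_def indicator_def by (auto simp: le_Suc_eq)
  then have "Phi P X (Suc n) A f =
     (\<integral>\<^sup>+\<omega>. indicator (cyl P X n A) \<omega> * (indicator (A (Suc n)) (X (Suc n) \<omega>) * f (X (Suc n) \<omega>)) \<partial>P)"
    unfolding Phi_def by simp
  also have "\<dots> = Phi P X n A (stp kern (A (Suc n)) f)"
    unfolding Phi_def stp_def by (rule markov_step[OF mc A h])
  finally show ?thesis .
qed

lemma Phi_shift:
  assumes mc: "markov_chain P \<Omega> kern X" and A: "\<And>i. A i \<in> sets \<Omega>"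
  shows "f \<in> borel_measurable \<Omega> \<Longrightarrow> Phi P X (lo + k) A f = Phi P X lo A (Ek kern (\<lambda>i. A (lo + i)) k f)"
proof (induction k arbitrary: f)
  case 0 then show ?case by simp
next
  case (Suc k)
  have m: "stp kern (A (Suc (lo + k))) f \<in> borel_measurable \<Omega>" using stp_meas[OF mc A Suc.prems] .
  have "Phi P X (lo + Suc k) A f = Phi P X (lo + k) A (stp kern (A (Suc (lo + k))) f)"
    using Phi_step[OF mc A Suc.prems, of "lo + k"] by simp
  also have "\<dots> = Phi P X lo A (Ek kern (\<lambda>i. A (lo + i)) k (stp kern (A (Suc (lo + k))) f))"
    using Suc.IH[OF m] .
  finally show ?case by simp
qed

lemma Phi_zero:
  assumes mc: "markov_chain P \<Omega> kern X" and A: "\<And>i. A i \<in> sets \<Omega>" and f[measurable]: "f \<in> borel_measurable \<Omega>"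
  shows "Phi P X 0 A f = (\<integral>\<^sup>+x. indicator (A 0) x * f x \<partial>distr P \<Omega> (X 0))"
proof -
  note Xm[measurable] = mc_facts(3)[OF mc]
  have A0[measurable]: "A 0 \<in> sets \<Omega>" using A .
  have "(\<integral>\<^sup>+x. indicator (A 0) x * f x \<partial>distr P \<Omega> (X 0)) = (\<integral>\<^sup>+\<omega>. indicator (A 0) (X 0 \<omega>) * f (X 0 \<omega>) \<partial>P)"
    by (rule nn_integral_distr) auto
  also have "\<dots> = Phi P X 0 A f" unfolding Phi_def cyl_def
    by (intro nn_integral_cong) (auto simp: indicator_def)
  finally show ?thesis by simp
qed

lemma Phi_formula:
  assumes mc: "markov_chain P \<Omega> kern X" and A: "\<And>i. A i \<in> sets \<Omega>" and f: "f \<in> borel_measurable \<Omega>"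
  shows "Phi P X n A f = (\<integral>\<^sup>+x. indicator (A 0) x * Ek kern A n f x \<partial>distr P \<Omega> (X 0))"
  using Phi_shift[OF mc A f, of 0 n] Phi_zero[OF mc A Ek_meas[OF mc A f]] by simp

lemma Phi_one:
  assumes mc: "markov_chain P \<Omega> kern X" and A: "\<And>i. A i \<in> sets \<Omega>"
  shows "Phi P X n A (\<lambda>_. 1) = ennreal (measure P (cyl P X n A))"
proof -
  interpret prob_space P using mc_facts(1)[OF mc] .
  show ?thesis unfolding Phi_def using cyl_sets[OF mc A] by (simp add: emeasure_eq_measure)
qed

lemma law_eq:
  assumes mc: "markov_chain P \<Omega> kern X" and mc2: "markov_chain Q \<Omega> kern Y"
    and init: "distr P \<Omega> (X 0) = distr Q \<Omega> (Y 0)" and A: "\<And>i. A i \<in> sets \<Omega>"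
  shows "measure P (cyl P X n A) = measure Q (cyl Q Y n A)"
proof -
  have "ennreal (measure P (cyl P X n A)) = ennreal (measure Q (cyl Q Y n A))"
    unfolding Phi_one[OF mc A, symmetric] Phi_one[OF mc2 A, symmetric]
    unfolding Phi_formula[OF mc A borel_measurable_const] Phi_formula[OF mc2 A borel_measurable_const] init by simp
  then show ?thesis by (simp add: ennreal_inj[OF measure_nonneg measure_nonneg])
qed


lemma exit_gt: "enat n < exit_time S x \<longleftrightarrow> (\<forall>i\<le>n. x i \<in> S)"
proof (cases "\<exists>m. x m \<notin> S")
  case True
  then have e: "exit_time S x = enat (LEAST m. x m \<notin> S)" by (simp add: exit_time_def)
  have L: "x (LEAST m. x m \<notin> S) \<notin> S" using True by (rule LeastI_ex)
  show ?thesis unfolding e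
  proof
    assume "enat n < enat (LEAST m. x m \<notin> S)"
    then have lt: "n < (LEAST m. x m \<notin> S)" by simp
    show "\<forall>i\<le>n. x i \<in> S"
    proof (intro allI impI)
      fix i assume "i \<le> n"
      then have "i < (LEAST m. x m \<notin> S)" using lt by linarith
      then show "x i \<in> S" using not_less_Least[of i "\<lambda>m. x m \<notin> S"] by blast
    qed
  next
    assume "\<forall>i\<le>n. x i \<in> S"
    then have "\<not> (LEAST m. x m \<notin> S) \<le> n" using L by blast
    then show "enat n < enat (LEAST m. x m \<notin> S)" by simp
  qed
next
  case False
  then show ?thesis by (simp add: exit_time_def)
qed

lemma exit_eq: "exit_time S x = enat t \<longleftrightarrow> (\<forall>i<t. x i \<in> S) \<and> x t \<notin> S"
proof
  assume h: "exit_time S x = enat t"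
  then have ex: "\<exists>m. x m \<notin> S" by (auto simp: exit_time_def split: if_splits)
  then have t: "t = (LEAST m. x m \<notin> S)" using h by (simp add: exit_time_def)
  have "\<forall>i<t. x i \<in> S" unfolding t using not_less_Least by blast
  moreover have "x t \<notin> S" unfolding t using ex by (rule LeastI_ex)
  ultimately show "(\<forall>i<t. x i \<in> S) \<and> x t \<notin> S" by blast
next
  assume h: "(\<forall>i<t. x i \<in> S) \<and> x t \<notin> S"
  then have "(LEAST m. x m \<notin> S) = t"
    by (intro Least_equality) (auto simp: not_less[symmetric])
  then show "exit_time S x = enat t" using h by (auto simp: exit_time_def)
qed

lemma qsd_facts:
  assumes "qsd Q \<Omega> X S \<nu>"
  shows "prob_space \<nu>" "sets \<nu> = sets \<Omega>" "measure \<nu> S = 1" "distr Q \<Omega> (X 0) = \<nu>"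
    "\<And>A n. A \<in> sets \<Omega> \<Longrightarrow> A \<subseteq> S \<Longrightarrow> measure \<nu> A =
          measure Q {\<omega>\<in>space Q. X n \<omega> \<in> A \<and> exit_time S (\<lambda>k. X k \<omega>) > enat n}
          / measure Q {\<omega>\<in>space Q. exit_time S (\<lambda>k. X k \<omega>) > enat n}"
  using assms unfolding qsd_def by blast+

lemma nu_S:
  assumes q: "qsd Q \<Omega> X S \<nu>" and S: "S \<in> sets \<Omega>" and D: "D \<in> sets \<Omega>"
  shows "measure \<nu> (D \<inter> S) = measure \<nu> D"
proof -
  interpret nu: prob_space \<nu> using qsd_facts(1)[OF q] .
  have "AE x in \<nu>. x \<in> S" using qsd_facts(3)[OF q] by (rule nu.AE_prob_1)
  then show ?thesis using qsd_facts(2)[OF q] S D by (intro measure_eq_AE) auto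
qed

lemma cyl_exit: "{\<omega>\<in>space Q. exit_time S (\<lambda>k. X k \<omega>) > enat n} = cyl Q X n (\<lambda>_. S)"
  by (auto simp: cyl_def exit_gt)

lemma p_pos:
  assumes q: "qsd Q \<Omega> X S \<nu>" and S: "S \<in> sets \<Omega>"
  shows "measure Q (cyl Q X n (\<lambda>_. S)) \<noteq> 0"
  using qsd_facts(5)[OF q S order_refl, of n] qsd_facts(3)[OF q] unfolding cyl_exit by auto

lemma qsd_fun:
  assumes mc: "markov_chain Q \<Omega> kern X" and q: "qsd Q \<Omega> X S \<nu>" and S: "S \<in> sets \<Omega>"
    and g[measurable]: "g \<in> borel_measurable \<Omega>"
  shows "Phi Q X n (\<lambda>_. S) g = ennreal (measure Q (cyl Q X n (\<lambda>_. S))) * integral\<^sup>N \<nu> g"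
proof -
  interpret prob_space Q using mc_facts(1)[OF mc] .
  interpret nu: prob_space \<nu> using qsd_facts(1)[OF q] .
  note Xm[measurable] = mc_facts(3)[OF mc]
  note Sm[measurable] = S
  define C where "C = cyl Q X n (\<lambda>_. S)"
  define p where "p = measure Q C"
  have C[measurable]: "C \<in> sets Q" unfolding C_def using cyl_sets[OF mc] S by auto
  define D' where "D' = density Q (indicator C)"
  have XS: "X n \<in> D' \<rightarrow>\<^sub>M \<Omega>" using Xm[of "n"] by (simp add: D'_def)
  define \<mu>1 where "\<mu>1 = distr D' \<Omega> (X n)"
  define \<mu>2 where "\<mu>2 = density \<nu> (\<lambda>_. ennreal p)"
  have snu: "sets \<nu> = sets \<Omega>" using qsd_facts(2)[OF q] .
  have L: "integral\<^sup>N \<mu>1 h = Phi Q X n (\<lambda>_. S) h"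
    if h[measurable]: "h \<in> borel_measurable \<Omega>" for h
    unfolding \<mu>1_def Phi_def C_def[symmetric]
    apply (subst nn_integral_distr[OF XS]) apply simp
    unfolding D'_def by (subst nn_integral_density) auto
  have R: "integral\<^sup>N \<mu>2 h = ennreal p * integral\<^sup>N \<nu> h"
    if h: "h \<in> borel_measurable \<Omega>" for h
  proof -
    have h': "h \<in> borel_measurable \<nu>" using h by (simp add: measurable_cong_sets[OF snu refl])
    show ?thesis unfolding \<mu>2_def
      by (simp add: nn_integral_density h' nn_integral_cmult)
  qed
  have eq: "\<mu>1 = \<mu>2"
  proof (rule measure_eqI)
    show "sets \<mu>1 = sets \<mu>2" unfolding \<mu>1_def \<mu>2_def using snu by simp
    fix D assume "D \<in> sets \<mu>1"
    then have D[measurable]: "D \<in> sets \<Omega>" unfolding \<mu>1_def by simp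
    define A' where "A' = (\<lambda>i. if i = n then D \<inter> S else S)"
    have A': "\<And>i. A' i \<in> sets \<Omega>" using D S by (simp add: A'_def)
    have "emeasure \<mu>1 D = integral\<^sup>N \<mu>1 (indicator D)" by (simp add: \<mu>1_def)
    also have "\<dots> = (\<integral>\<^sup>+\<omega>. indicator (cyl Q X n A') \<omega> \<partial>Q)"
    proof -
      have "\<And>\<omega>. indicator C \<omega> * indicator D (X n \<omega>) = (indicator (cyl Q X n A') \<omega> :: ennreal)"
        unfolding C_def cyl_def A'_def indicator_def by auto
      then show ?thesis using L[of "indicator D"] unfolding Phi_def C_def by simp
    qed
    also have "\<dots> = ennreal (measure Q (cyl Q X n A'))"
      using cyl_sets[OF mc A'] by (simp add: emeasure_eq_measure)
    also have "measure Q (cyl Q X n A') = measure \<nu> D * p"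
    proof -
      have "measure \<nu> (D \<inter> S) = measure Q (cyl Q X n A') / p"
      proof -
        have e: "{\<omega>\<in>space Q. X n \<omega> \<in> D \<inter> S \<and> enat n < exit_time S (\<lambda>k. X k \<omega>)} = cyl Q X n A'"
        proof (rule set_eqI, rule iffI)
          fix \<omega> assume "\<omega> \<in> {\<omega>\<in>space Q. X n \<omega> \<in> D \<inter> S \<and> enat n < exit_time S (\<lambda>k. X k \<omega>)}"
          then show "\<omega> \<in> cyl Q X n A'" unfolding cyl_def A'_def exit_gt by auto
        next
          fix \<omega> assume w: "\<omega> \<in> cyl Q X n A'"
          then have "\<forall>i\<le>n. X i \<omega> \<in> S" unfolding cyl_def A'_def by (metis (no_types, lifting) Int_iff mem_Collect_eq)
          moreover have "X n \<omega> \<in> D" using w unfolding cyl_def A'_def by auto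
          ultimately show "\<omega> \<in> {\<omega>\<in>space Q. X n \<omega> \<in> D \<inter> S \<and> enat n < exit_time S (\<lambda>k. X k \<omega>)}"
            using w unfolding exit_gt cyl_def by auto
        qed
        have "D \<inter> S \<in> sets \<Omega>" using D S by auto
        from qsd_facts(5)[OF q this, of n] show ?thesis unfolding e cyl_exit p_def C_def by simp
      qed
      moreover have "p \<noteq> 0" unfolding p_def C_def using p_pos[OF q S] .
      ultimately show ?thesis using nu_S[OF q S D] by simp
    qed
    also have "ennreal (measure \<nu> D * p) = emeasure \<mu>2 D"
    proof -
      have Dn: "D \<in> sets \<nu>" using D snu by simp
      have "emeasure \<mu>2 D = (\<integral>\<^sup>+x. ennreal p * indicator D x \<partial>\<nu>)"
        unfolding \<mu>2_def using Dn by (simp add: emeasure_density)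
      also have "\<dots> = ennreal p * emeasure \<nu> D" using Dn by (rule nn_integral_cmult_indicator)
      also have "\<dots> = ennreal (measure \<nu> D * p)"
        unfolding p_def by (simp add: nu.emeasure_eq_measure ennreal_mult mult.commute)
      finally show ?thesis by simp
    qed
    finally show "emeasure \<mu>1 D = emeasure \<mu>2 D" .
  qed
  show ?thesis using L[OF g] R[OF g] eq unfolding p_def C_def by simp
qed


lemma cyl_cong: "(\<And>i. i \<le> n \<Longrightarrow> A i = B i) \<Longrightarrow> cyl P X n A = cyl P X n B"
  unfolding cyl_def by auto

lemma p0:
  assumes mc: "markov_chain Q \<Omega> kern X" and q: "qsd Q \<Omega> X S \<nu>" and S: "S \<in> sets \<Omega>"
  shows "measure Q (cyl Q X 0 (\<lambda>_. S)) = 1"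
proof -
  have "cyl Q X 0 (\<lambda>_. S) = X 0 -` S \<inter> space Q" unfolding cyl_def by auto
  then have "measure Q (cyl Q X 0 (\<lambda>_. S)) = measure (distr Q \<Omega> (X 0)) S"
    using mc_facts(3)[OF mc] S by (simp add: measure_distr)
  then show ?thesis using qsd_facts(3,4)[OF q] by simp
qed

lemma qsd_mult:
  assumes mc: "markov_chain Q \<Omega> kern X" and q: "qsd Q \<Omega> X S \<nu>" and S: "S \<in> sets \<Omega>"
    and A: "\<And>i. A i \<in> sets \<Omega>" and AS: "\<And>i. i \<le> n \<Longrightarrow> A i = S"
  shows "measure Q (cyl Q X (n + k) A) = measure Q (cyl Q X n (\<lambda>_. S)) * measure Q (cyl Q X k (\<lambda>i. A (n + i)))"
proof -
  define A' where "A' = (\<lambda>i. A (n + i))"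
  have A': "\<And>i. A' i \<in> sets \<Omega>" using A by (simp add: A'_def)
  define g where "g = Ek kern A' k (\<lambda>_. 1)"
  have g: "g \<in> borel_measurable \<Omega>" unfolding g_def by (rule Ek_meas[OF mc A']) simp
  have "ennreal (measure Q (cyl Q X (n + k) A)) = Phi Q X (n + k) A (\<lambda>_. 1)"
    using Phi_one[OF mc A] by simp
  also have "\<dots> = Phi Q X n A g"
    unfolding g_def A'_def by (rule Phi_shift[OF mc A]) simp
  also have "\<dots> = Phi Q X n (\<lambda>_. S) g"
    unfolding Phi_def using cyl_cong[of n A "\<lambda>_. S" Q X] AS by simp
  also have "\<dots> = ennreal (measure Q (cyl Q X n (\<lambda>_. S))) * integral\<^sup>N \<nu> g"
    by (rule qsd_fun[OF mc q S g])
  finally have 1: "ennreal (measure Q (cyl Q X (n + k) A)) = ennreal (measure Q (cyl Q X n (\<lambda>_. S))) * integral\<^sup>N \<nu> g" .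
  have "ennreal (measure Q (cyl Q X k A')) = Phi Q X (0 + k) A' (\<lambda>_. 1)"
    using Phi_one[OF mc A'] by simp
  also have "\<dots> = Phi Q X 0 A' g"
    unfolding g_def by (subst Phi_shift[OF mc A']) simp_all
  also have "\<dots> = Phi Q X 0 (\<lambda>_. S) g"
    unfolding Phi_def using cyl_cong[of 0 A' "\<lambda>_. S" Q X] AS by (simp add: A'_def)
  also have "\<dots> = integral\<^sup>N \<nu> g"
    using qsd_fun[OF mc q S g, of 0] p0[OF mc q S] by simp
  finally have 2: "ennreal (measure Q (cyl Q X k A')) = integral\<^sup>N \<nu> g" .
  have "ennreal (measure Q (cyl Q X (n + k) A)) = ennreal (measure Q (cyl Q X n (\<lambda>_. S)) * measure Q (cyl Q X k A'))"
    unfolding 1 2[symmetric] by (simp add: ennreal_mult)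
  then show ?thesis unfolding A'_def
    by (subst (asm) ennreal_inj) (auto)
qed


definition ex_set :: "'a set \<Rightarrow> 'a set \<Rightarrow> nat \<Rightarrow> nat \<Rightarrow> 'a set" where
  "ex_set S B r = (\<lambda>i. if i < r then S else B - S)"

lemma p_add:
  assumes mc: "markov_chain Q \<Omega> kern X" and q: "qsd Q \<Omega> X S \<nu>" and S: "S \<in> sets \<Omega>"
  shows "measure Q (cyl Q X (a + b) (\<lambda>_. S)) = measure Q (cyl Q X a (\<lambda>_. S)) * measure Q (cyl Q X b (\<lambda>_. S))"
  using qsd_mult[OF mc q S, of "\<lambda>_. S" a b] S by simp

lemma prod_p:
  assumes mc: "markov_chain Q \<Omega> kern X" and q: "qsd Q \<Omega> X S \<nu>" and S: "S \<in> sets \<Omega>"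
  shows "finite J \<Longrightarrow> (\<Prod>j\<in>J. measure Q (cyl Q X (c j) (\<lambda>_. S))) = measure Q (cyl Q X (\<Sum>j\<in>J. c j) (\<lambda>_. S))"
proof (induction J rule: finite_induct)
  case empty then show ?case using p0[OF mc q S] by simp
next
  case (insert x F) then show ?case using p_add[OF mc q S] by simp
qed

lemma ex_mult:
  assumes mc: "markov_chain Q \<Omega> kern X" and q: "qsd Q \<Omega> X S \<nu>" and S: "S \<in> sets \<Omega>"
    and B: "B \<in> sets \<Omega>" and r: "1 \<le> r"
  shows "measure Q (cyl Q X (a + r) (ex_set S B (a + r))) = measure Q (cyl Q X a (\<lambda>_. S)) * measure Q (cyl Q X r (ex_set S B r))"
proof -
  have "measure Q (cyl Q X (a + r) (ex_set S B (a + r))) = measure Q (cyl Q X a (\<lambda>_. S)) * measure Q (cyl Q X r (\<lambda>i. ex_set S B (a + r) (a + i)))"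
    by (rule qsd_mult[OF mc q S]) (use S B r in \<open>auto simp: ex_set_def\<close>)
  moreover have "(\<lambda>i. ex_set S B (a + r) (a + i)) = ex_set S B r" by (auto simp: ex_set_def)
  ultimately show ?thesis by simp
qed

lemma poll_MK:
  fixes taus :: "nat \<Rightarrow> enat"
  assumes T: "1 \<le> T" and m: "1 \<le> m" and k: "k \<in> {1..N}" and tk: "taus k \<le> enat (m * T)"
    and lt: "\<forall>j\<in>{1..N}. j < k \<longrightarrow> enat (m * T) < taus j"
    and prev: "2 \<le> m \<longrightarrow> (\<forall>j\<in>{1..N}. enat ((m - 1) * T) < taus j)"
  shows "poll_M N T taus = m" "poll_K N T taus = k"
proof -
  show M: "poll_M N T taus = m" unfolding poll_M_def
  proof (rule Least_equality)
    show "1 \<le> m \<and> (\<exists>j\<in>{1..N}. taus j \<le> enat (m * T))" using m k tk by blast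
    fix y assume y: "1 \<le> y \<and> (\<exists>j\<in>{1..N}. taus j \<le> enat (y * T))"
    show "m \<le> y"
    proof (rule ccontr)
      assume "\<not> m \<le> y"
      then have "2 \<le> m" "y \<le> m - 1" using y by auto
      then have "y * T \<le> (m - 1) * T" by simp
      then show False using y prev \<open>2 \<le> m\<close> by (metis enat_ord_simps(1) leD order.trans)
    qed
  qed
  show "poll_K N T taus = k" unfolding poll_K_def M
  proof (rule Least_equality)
    show "k \<in> {1..N} \<and> taus k \<le> enat (m * T)" using k tk by blast
    fix y assume "y \<in> {1..N} \<and> taus y \<le> enat (m * T)"
    then show "k \<le> y" using lt by (meson leD not_le)
  qed
qed

lemma poll_props:
  fixes taus :: "nat \<Rightarrow> enat"
  assumes T: "1 \<le> T" and fin: "\<exists>j\<in>{1..N}. taus j < \<infinity>"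
  defines "m \<equiv> poll_M N T taus" and "k \<equiv> poll_K N T taus"
  shows "1 \<le> m" "k \<in> {1..N}" "taus k \<le> enat (m * T)"
    "\<forall>j\<in>{1..N}. j < k \<longrightarrow> enat (m * T) < taus j"
    "2 \<le> m \<longrightarrow> (\<forall>j\<in>{1..N}. enat ((m - 1) * T) < taus j)"
proof -
  obtain j0 a where j0: "j0 \<in> {1..N}" "taus j0 = enat a" using fin by (metis less_infinityE)
  have ex: "\<exists>m. 1 \<le> m \<and> (\<exists>j\<in>{1..N}. taus j \<le> enat (m * T))"
  proof (intro exI conjI)
    show "1 \<le> Suc a" by simp
    have "a \<le> Suc a * T" using T by (metis le_SucI mult.commute mult_le_mono1 mult_1 order_refl le_trans)
    then have "taus j0 \<le> enat (Suc a * T)" using j0 by simp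
    then show "\<exists>j\<in>{1..N}. taus j \<le> enat (Suc a * T)" using j0(1) by blast
  qed
  have Mp: "1 \<le> m \<and> (\<exists>j\<in>{1..N}. taus j \<le> enat (m * T))"
    unfolding m_def poll_M_def by (rule LeastI_ex[OF ex])
  then show "1 \<le> m" by blast
  have exk: "\<exists>j. j \<in> {1..N} \<and> taus j \<le> enat (m * T)" using Mp by blast
  have Kp: "k \<in> {1..N} \<and> taus k \<le> enat (m * T)"
    unfolding k_def poll_K_def m_def[symmetric] by (rule LeastI_ex[OF exk])
  then show "k \<in> {1..N}" "taus k \<le> enat (m * T)" by blast+
  show "\<forall>j\<in>{1..N}. j < k \<longrightarrow> enat (m * T) < taus j"
  proof (intro ballI impI)
    fix j assume "j \<in> {1..N}" "j < k"
    then have "\<not> (j \<in> {1..N} \<and> taus j \<le> enat (m * T))"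
      unfolding k_def poll_K_def m_def[symmetric] using not_less_Least by blast
    then show "enat (m * T) < taus j" using \<open>j \<in> {1..N}\<close> by (simp add: not_le)
  qed
  show "2 \<le> m \<longrightarrow> (\<forall>j\<in>{1..N}. enat ((m - 1) * T) < taus j)"
  proof (intro impI ballI)
    fix j assume "2 \<le> m" "j \<in> {1..N}"
    have "m - 1 < m" using \<open>2 \<le> m\<close> by simp
    then have "\<not> (1 \<le> m - 1 \<and> (\<exists>j\<in>{1..N}. taus j \<le> enat ((m - 1) * T)))"
      unfolding m_def poll_M_def using not_less_Least by blast
    then show "enat ((m - 1) * T) < taus j" using \<open>2 \<le> m\<close> \<open>j \<in> {1..N}\<close> by (auto simp: not_le)
  qed
qed


lemma coll_fin:
  fixes C :: "nat \<Rightarrow> 'b set"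
  assumes "\<And>j. j \<in> J \<Longrightarrow> C j \<in> sets M"
  shows "{\<omega>\<in>space M. \<forall>j\<in>J. \<omega> \<in> C j} \<in> sets M"
proof -
  have "{\<omega>\<in>space M. \<forall>j\<in>J. \<omega> \<in> C j} = {\<omega>\<in>space M. \<forall>j. j \<in> J \<longrightarrow> \<omega> \<in> C j}" by auto
  also have "\<dots> \<in> sets M"
  proof (rule sets.sets_Collect_countable_All)
    fix j
    show "{x \<in> space M. j \<in> J \<longrightarrow> x \<in> C j} \<in> sets M"
      using assms[of j] by (cases "j \<in> J") (auto simp: Collect_conj_eq[symmetric] Int_def[symmetric] sets.Int_space_eq1)
  qed
  finally show ?thesis .
qed

lemma cyl_gt_iff: "\<omega> \<in> cyl P X a (\<lambda>_. S) \<longleftrightarrow> \<omega> \<in> space P \<and> enat a < exit_time S (\<lambda>n. X n \<omega>)"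
  unfolding cyl_def exit_gt by simp

lemma cyl_ex_iff: "\<omega> \<in> cyl P X s (ex_set S B s) \<longleftrightarrow> \<omega> \<in> space P \<and> exit_time S (\<lambda>n. X n \<omega>) = enat s \<and> X s \<omega> \<in> B"
  unfolding cyl_def exit_eq ex_set_def
  by (auto simp: le_less)

lemma indep_cyl:
  fixes N :: nat
  assumes ps: "prob_space P"
    and replicas: "\<And>j. j \<in> {1..N} \<Longrightarrow> markov_chain P \<Omega> kern (Xs j)"
    and indep: "prob_space.indep_vars P (\<lambda>_. Pi\<^sub>M UNIV (\<lambda>_. \<Omega>)) (\<lambda>j \<omega>. \<lambda>n. Xs j n \<omega>) {1..N}"
    and N: "N \<ge> 1" and A: "\<And>j i. A j i \<in> sets \<Omega>"
  shows "measure P (\<Inter>j\<in>{1..N}. cyl P (Xs j) (c j) (A j)) = (\<Prod>j\<in>{1..N}. measure P (cyl P (Xs j) (c j) (A j)))"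
proof -
  interpret prob_space P using ps .
  have ind: "indep_sets (\<lambda>j. {(\<lambda>\<omega>. \<lambda>n. Xs j n \<omega>) -` D \<inter> space P | D. D \<in> sets (Pi\<^sub>M UNIV (\<lambda>_. \<Omega>))}) {1..N}"
    using indep unfolding indep_vars_def2 by blast
  show ?thesis
  proof (rule indep_setsD[OF ind])
    show "{1..N} \<subseteq> {1..N}" "{1..N} \<noteq> {}" "finite {1..N}" using N by auto
    show "\<forall>j\<in>{1..N}. cyl P (Xs j) (c j) (A j) \<in> {(\<lambda>\<omega>. \<lambda>n. Xs j n \<omega>) -` D \<inter> space P | D. D \<in> sets (Pi\<^sub>M UNIV (\<lambda>_. \<Omega>))}"
    proof
      fix j assume j: "j \<in> {1..N}"
      define D where "D = {x\<in>space (Pi\<^sub>M UNIV (\<lambda>_. \<Omega>)). \<forall>i\<le>c j. x i \<in> A j i}"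
      have Am[measurable]: "\<And>i. A j i \<in> sets \<Omega>" using A .
      have D: "D \<in> sets (Pi\<^sub>M UNIV (\<lambda>_. \<Omega>))" unfolding D_def by measurable
      have sp: "\<And>\<omega> i. \<omega> \<in> space P \<Longrightarrow> Xs j i \<omega> \<in> space \<Omega>"
        by (rule measurable_space[OF mc_facts(3)[OF replicas[OF j]]])
      have "(\<lambda>\<omega>. \<lambda>n. Xs j n \<omega>) -` D \<inter> space P = cyl P (Xs j) (c j) (A j)"
        unfolding D_def cyl_def using sp by (auto simp: space_PiM)
      then show "cyl P (Xs j) (c j) (A j) \<in> {(\<lambda>\<omega>. \<lambda>n. Xs j n \<omega>) -` D \<inter> space P | D. D \<in> sets (Pi\<^sub>M UNIV (\<lambda>_. \<Omega>))}"
        using D by blast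
    qed
  qed
qed

lemma arith_decomp:
  fixes N T m k r t :: nat
  assumes "1 \<le> T" "1 \<le> N" "1 \<le> m" "1 \<le> k" "k \<le> N" "1 \<le> r" "r \<le> T"
    and t: "t = N*(m-1)*T + (k-1)*T + r"
  shows "((t-1) div T) div N + 1 = m" "((t-1) div T) mod N + 1 = k" "(t-1) mod T + 1 = r"
proof -
  obtain m' k' r' where m: "m = Suc m'" and k: "k = Suc k'" and r: "r = Suc r'"
    using assms by (metis Suc_le_D One_nat_def)
  have "t - 1 = (N*m' + k')*T + r'" using t unfolding m k r by (simp add: algebra_simps)
  moreover have "r' < T" using assms(7) r by simp
  moreover have "k' < N" using assms(5) k by simp
  ultimately have q: "(t-1) div T = N*m' + k'" and rr: "(t-1) mod T = r'"
    by (simp_all add: div_mult_self_is_m mod_mult_self3)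
  show "((t-1) div T) div N + 1 = m" unfolding q m using \<open>k' < N\<close> by simp
  show "((t-1) div T) mod N + 1 = k" unfolding q k using \<open>k' < N\<close> by simp
  show "(t-1) mod T + 1 = r" unfolding rr r by simp
qed

lemma sum_ar:
  fixes N T m k :: nat
  assumes "1 \<le> m" "1 \<le> k" "k \<le> N"
  shows "(m-1)*T + ((k-1)*(m*T) + (N-k)*((m-1)*T)) = N*(m-1)*T + (k-1)*T"
proof -
  obtain m' k' n where m: "m = Suc m'" and k: "k = Suc k'" and N: "N = k + n"
    using assms by (metis Suc_le_D One_nat_def le_Suc_ex)
  show ?thesis unfolding m k N by (simp add: algebra_simps)
qed

lemma cyl_mono_gt: "b \<le> a \<Longrightarrow> \<omega> \<in> cyl P X a (\<lambda>_. S) \<Longrightarrow> \<omega> \<in> cyl P X b (\<lambda>_. S)"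
  unfolding cyl_def by auto

theorem proposition1:
  fixes \<Omega> :: "'a measure" and kern :: "'a \<Rightarrow> 'a measure" and S :: "'a set"
    and \<nu> :: "'a measure"
    and Q :: "'b measure" and X :: "nat \<Rightarrow> 'b \<Rightarrow> 'a"
    and P :: "'c measure" and Xs :: "nat \<Rightarrow> nat \<Rightarrow> 'c \<Rightarrow> 'a"
    and N Tpoll :: nat
  assumes S: "S \<in> sets \<Omega>"
    and chain: "markov_chain Q \<Omega> kern X"
    and qsd: "qsd Q \<Omega> X S \<nu>"
    and N: "N \<ge> 1" and Tpoll: "Tpoll \<ge> 1"
    and replicas: "\<And>j. j \<in> {1..N} \<Longrightarrow> markov_chain P \<Omega> kern (Xs j)"
    and init: "\<And>j. j \<in> {1..N} \<Longrightarrow> distr P \<Omega> (Xs j 0) = \<nu>"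
    and indep: "prob_space.indep_vars P (\<lambda>_. Pi\<^sub>M UNIV (\<lambda>_. \<Omega>))
                  (\<lambda>j \<omega>. \<lambda>n. Xs j n \<omega>) {1..N}"
  shows "\<forall>B t. B \<in> sets \<Omega> \<longrightarrow>
    measure P {\<omega>\<in>space P.
        (\<exists>j\<in>{1..N}. exit_time S (\<lambda>n. Xs j n \<omega>) < \<infinity>) \<and>
        X_acc N Tpoll (\<lambda>j. exit_time S (\<lambda>n. Xs j n \<omega>)) (\<lambda>j n. Xs j n \<omega>) \<in> B \<and>
        T_acc N Tpoll (\<lambda>j. exit_time S (\<lambda>n. Xs j n \<omega>)) = t}
    = measure Q {\<omega>\<in>space Q. exit_time S (\<lambda>n. X n \<omega>) = enat t \<and> X t \<omega> \<in> B}"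
proof (intro allI impI)
  fix B t assume B: "B \<in> sets \<Omega>"
  have ps: "prob_space P" using mc_facts(1)[OF replicas[of 1]] N by auto
  interpret prob_space P by (rule ps)
  have init': "\<And>j. j \<in> {1..N} \<Longrightarrow> distr P \<Omega> (Xs j 0) = distr Q \<Omega> (X 0)"
    using init qsd_facts(4)[OF qsd] by simp
  have exs: "\<And>r i. ex_set S B r i \<in> sets \<Omega>" using S B by (auto simp: ex_set_def)
  have cs: "\<And>j a A. j \<in> {1..N} \<Longrightarrow> (\<And>i. A i \<in> sets \<Omega>) \<Longrightarrow> cyl P (Xs j) a A \<in> sets P"
    using cyl_sets replicas by blast
  have cyl_sp: "\<And>j a A. cyl P (Xs j) a A \<subseteq> space P" unfolding cyl_def by auto
  define E where "E = {\<omega>\<in>space P.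
        (\<exists>j\<in>{1..N}. exit_time S (\<lambda>n. Xs j n \<omega>) < \<infinity>) \<and>
        X_acc N Tpoll (\<lambda>j. exit_time S (\<lambda>n. Xs j n \<omega>)) (\<lambda>j n. Xs j n \<omega>) \<in> B \<and>
        T_acc N Tpoll (\<lambda>j. exit_time S (\<lambda>n. Xs j n \<omega>)) = t}"
  define Fp where "Fp m k s = {\<omega>\<in>space P. 1 \<le> m \<and> k \<in> {1..N} \<and> s \<le> m*Tpoll \<and>
     (N-1)*(m-1)*Tpoll + (k-1)*Tpoll + s = t \<and> \<omega> \<in> cyl P (Xs k) s (ex_set S B s) \<and>
     (\<forall>j\<in>{1..N}. j < k \<longrightarrow> \<omega> \<in> cyl P (Xs j) (m*Tpoll) (\<lambda>_. S)) \<and>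
     (2 \<le> m \<longrightarrow> (\<forall>j\<in>{1..N}. \<omega> \<in> cyl P (Xs j) ((m-1)*Tpoll) (\<lambda>_. S)))}" for m k s
  have memE: "\<omega> \<in> E \<longleftrightarrow> (\<exists>m k s. \<omega> \<in> Fp m k s)" for \<omega>
  proof
    assume w: "\<omega> \<in> E"
    define taus where "taus = (\<lambda>j. exit_time S (\<lambda>n. Xs j n \<omega>))"
    have sp: "\<omega> \<in> space P" and fin: "\<exists>j\<in>{1..N}. taus j < \<infinity>"
      and XB: "X_acc N Tpoll taus (\<lambda>j n. Xs j n \<omega>) \<in> B" and Tt: "T_acc N Tpoll taus = t"
      using w unfolding E_def taus_def by auto
    define m where "m = poll_M N Tpoll taus"
    define k where "k = poll_K N Tpoll taus"
    note pp = poll_props[OF Tpoll fin, folded m_def k_def]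
    obtain s where s: "taus k = enat s" using pp(3) enat_ile by blast
    have XB': "Xs k s \<omega> \<in> B" using XB s unfolding X_acc_def Let_def k_def[symmetric] by simp
    have teq: "(N-1)*(m-1)*Tpoll + (k-1)*Tpoll + s = t"
      using Tt s unfolding T_acc_def Let_def m_def[symmetric] k_def[symmetric] by simp
    have "s \<le> m * Tpoll" using pp(3) s by simp
    then have "\<omega> \<in> Fp m k s" unfolding Fp_def cyl_ex_iff cyl_gt_iff
      using sp pp(1,2,4,5) teq s XB' unfolding taus_def by auto
    then show "\<exists>m k s. \<omega> \<in> Fp m k s" by blast
  next
    assume "\<exists>m k s. \<omega> \<in> Fp m k s"
    then obtain m k s where w: "\<omega> \<in> Fp m k s" by blast
    define taus where "taus = (\<lambda>j. exit_time S (\<lambda>n. Xs j n \<omega>))"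
    have sp: "\<omega> \<in> space P" and m: "1 \<le> m" and k: "k \<in> {1..N}" and sm: "s \<le> m*Tpoll"
      and teq: "(N-1)*(m-1)*Tpoll + (k-1)*Tpoll + s = t"
      and tk: "taus k = enat s" and XB: "Xs k s \<omega> \<in> B"
      and lt: "\<forall>j\<in>{1..N}. j < k \<longrightarrow> enat (m*Tpoll) < taus j"
      and prev: "2 \<le> m \<longrightarrow> (\<forall>j\<in>{1..N}. enat ((m-1)*Tpoll) < taus j)"
      using w unfolding Fp_def cyl_ex_iff cyl_gt_iff taus_def by auto
    have tk': "taus k \<le> enat (m*Tpoll)" using tk sm by simp
    note MK = poll_MK[OF Tpoll m k tk' lt prev]
    have fin: "\<exists>j\<in>{1..N}. taus j < \<infinity>" using k tk by auto
    have "X_acc N Tpoll taus (\<lambda>j n. Xs j n \<omega>) \<in> B" unfolding X_acc_def Let_def MK tk using XB by simp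
    moreover have "T_acc N Tpoll taus = t" unfolding T_acc_def Let_def MK tk using teq by simp
    ultimately show "\<omega> \<in> E" using sp fin unfolding E_def taus_def by auto
  qed
  have Fp_sets: "Fp m k s \<in> sets P" for m k s
  proof (cases "k \<in> {1..N}")
    case False
    then have "Fp m k s = {}" unfolding Fp_def by blast
    then show ?thesis by (simp only: sets.empty_sets)
  next
    case True
    have "Fp m k s = {\<omega>\<in>space P. 1 \<le> m \<and> s \<le> m*Tpoll \<and> (N-1)*(m-1)*Tpoll + (k-1)*Tpoll + s = t}
      \<inter> cyl P (Xs k) s (ex_set S B s)
      \<inter> {\<omega>\<in>space P. \<forall>j\<in>{j\<in>{1..N}. j < k}. \<omega> \<in> cyl P (Xs j) (m*Tpoll) (\<lambda>_. S)}
      \<inter> (if 2 \<le> m then {\<omega>\<in>space P. \<forall>j\<in>{1..N}. \<omega> \<in> cyl P (Xs j) ((m-1)*Tpoll) (\<lambda>_. S)} else space P)"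
      unfolding Fp_def using True cyl_sp by (cases "2 \<le> m"; simp only: if_P if_not_P if_False; blast)
    also have "\<dots> \<in> sets P"
    proof -
      have s1: "{\<omega>\<in>space P. 1 \<le> m \<and> s \<le> m*Tpoll \<and> (N-1)*(m-1)*Tpoll + (k-1)*Tpoll + s = t} \<in> sets P"
        by (rule sets.sets_Collect_const)
      have s2: "cyl P (Xs k) s (ex_set S B s) \<in> sets P" using cs[OF True exs] .
      have s3: "{\<omega>\<in>space P. \<forall>j\<in>{j\<in>{1..N}. j < k}. \<omega> \<in> cyl P (Xs j) (m*Tpoll) (\<lambda>_. S)} \<in> sets P"
        by (rule coll_fin, rule cs) (use S in auto)
      have s4: "{\<omega>\<in>space P. \<forall>j\<in>{1..N}. \<omega> \<in> cyl P (Xs j) ((m-1)*Tpoll) (\<lambda>_. S)} \<in> sets P"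
        by (rule coll_fin, rule cs) (use S in auto)
      have s5: "(if 2 \<le> m then {\<omega>\<in>space P. \<forall>j\<in>{1..N}. \<omega> \<in> cyl P (Xs j) ((m-1)*Tpoll) (\<lambda>_. S)} else space P) \<in> sets P"
        by (cases "2 \<le> m") (simp_all only: if_P if_not_P if_False s4 sets.top)
      show ?thesis by (intro sets.Int s1 s2 s3 s5)
    qed
    finally show ?thesis .
  qed
  have E_eq: "E = (\<Union>m. \<Union>k. \<Union>s. Fp m k s)" using memE by auto
  have E_sets: "E \<in> sets P" unfolding E_eq using Fp_sets by auto
  define Z where "Z = (\<Union>j\<in>{1..N}. Xs j 0 -` (space \<Omega> - S) \<inter> space P)"
  have Z: "Z \<in> null_sets P" unfolding Z_def
  proof (rule null_sets_UN')
    show "countable {1..N}" by simp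
    fix j assume j: "j \<in> {1..N}"
    interpret nu: prob_space \<nu> using qsd_facts(1)[OF qsd] .
    have X0: "Xs j 0 \<in> P \<rightarrow>\<^sub>M \<Omega>" using mc_facts(3)[OF replicas[OF j]] .
    have Sc: "space \<Omega> - S \<in> sets \<Omega>" using S by auto
    have "emeasure P (Xs j 0 -` (space \<Omega> - S) \<inter> space P) = emeasure (distr P \<Omega> (Xs j 0)) (space \<Omega> - S)"
      using X0 Sc by (simp add: emeasure_distr)
    also have "\<dots> = emeasure \<nu> (space \<nu> - S)" using init[OF j] qsd_facts(2)[OF qsd] sets_eq_imp_space_eq by metis
    also have "\<dots> = 0" using nu.prob_compl[of S] qsd_facts(2,3)[OF qsd] S by (simp add: nu.emeasure_eq_measure)
    finally show "Xs j 0 -` (space \<Omega> - S) \<inter> space P \<in> null_sets P"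
      using X0 Sc by (auto intro: measurable_sets)
  qed
  have notZ: "\<And>\<omega> j. \<omega> \<in> space P \<Longrightarrow> \<omega> \<notin> Z \<Longrightarrow> j \<in> {1..N} \<Longrightarrow> Xs j 0 \<omega> \<in> S"
    unfolding Z_def using measurable_space[OF mc_facts(3)[OF replicas]] by blast
  have rhs: "{\<omega>\<in>space Q. exit_time S (\<lambda>n. X n \<omega>) = enat t \<and> X t \<omega> \<in> B} = cyl Q X t (ex_set S B t)"
    using cyl_ex_iff[of _ Q X t S B] by auto
  have s_pos: "1 \<le> s" if "\<omega> \<in> Fp m k s" "\<omega> \<notin> Z" for \<omega> m k s
  proof (rule ccontr)
    assume "\<not> 1 \<le> s" then have "s = 0" by simp
    have "\<omega> \<in> space P" "k \<in> {1..N}" "\<omega> \<in> cyl P (Xs k) s (ex_set S B s)" using that(1) unfolding Fp_def by auto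
    then have "Xs k 0 \<omega> \<notin> S" unfolding cyl_def ex_set_def \<open>s = 0\<close> by auto
    then show False using notZ \<open>\<omega> \<in> space P\<close> that(2) \<open>k \<in> {1..N}\<close> by blast
  qed
  have main: "measure P E = measure Q (cyl Q X t (ex_set S B t))"
  proof (cases "t = 0")
    case True
    have "E \<subseteq> Z"
    proof
      fix \<omega> assume "\<omega> \<in> E"
      then obtain m k s where w: "\<omega> \<in> Fp m k s" using memE by blast
      then have "(N-1)*(m-1)*Tpoll + (k-1)*Tpoll + s = t" unfolding Fp_def by auto
      show "\<omega> \<in> Z"
      proof (rule ccontr)
        assume "\<omega> \<notin> Z"
        then have "1 \<le> s" using s_pos w by blast
        then show False using \<open>(N-1)*(m-1)*Tpoll + (k-1)*Tpoll + s = t\<close> True by simp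
      qed
    qed
    then have "E \<in> null_sets P" using Z E_sets null_sets_subset by blast
    then have l: "measure P E = 0" unfolding measure_def by (subst null_setsD1) simp_all
    have c0: "cyl Q X 0 (ex_set S B 0) = X 0 -` (B - S) \<inter> space Q" unfolding cyl_def ex_set_def by auto
    have "measure Q (cyl Q X 0 (ex_set S B 0)) = measure (distr Q \<Omega> (X 0)) (B - S)"
      unfolding c0 using mc_facts(3)[OF chain] S B by (simp add: measure_distr)
    also have "\<dots> = measure \<nu> ((B - S) \<inter> S)" using nu_S[OF qsd S, of "B - S"] S B qsd_facts(4)[OF qsd] by auto
    also have "\<dots> = 0" by (metis Diff_disjoint Int_commute measure_empty)
    finally show ?thesis using l True by simp
  next
    case False
    define T where "T = Tpoll"
    define q where "q = (t - 1) div T"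
    define r0 where "r0 = (t - 1) mod T + 1"
    define m0 where "m0 = q div N + 1"
    define k0 where "k0 = q mod N + 1"
    have T: "1 \<le> T" using Tpoll by (simp add: T_def)
    have r0: "1 \<le> r0" "r0 \<le> T" unfolding r0_def using T by (auto simp: Suc_le_eq)
    have m0: "1 \<le> m0" unfolding m0_def by simp
    have k0: "k0 \<in> {1..N}" unfolding k0_def using N by (auto simp: Suc_le_eq)
    have teq0: "t = N*(m0-1)*T + (k0-1)*T + r0"
    proof -
      have "t - 1 = q * T + (t - 1) mod T" unfolding q_def by simp
      moreover have "q = N * (m0 - 1) + (k0 - 1)" unfolding m0_def k0_def by simp
      ultimately show ?thesis unfolding r0_def using False by (simp add: algebra_simps)
    qed
    define c where "c j = (if j < k0 then m0*T else if j = k0 then (m0-1)*T + r0 else (m0-1)*T)" for j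
    define A where "A j = (if j = k0 then ex_set S B ((m0-1)*T + r0) else (\<lambda>_. S))" for j
    have A: "\<And>j i. A j i \<in> sets \<Omega>" unfolding A_def using exs S by auto
    define F where "F = (\<Inter>j\<in>{1..N}. cyl P (Xs j) (c j) (A j))"
    have F_sets: "F \<in> sets P" unfolding F_def using N A cs by (intro sets.finite_INT) auto
    have FE: "F \<subseteq> E"
    proof
      fix \<omega> assume w: "\<omega> \<in> F"
      have "\<omega> \<in> cyl P (Xs 1) (c 1) (A 1)" using w N unfolding F_def by auto
      then have sp: "\<omega> \<in> space P" using cyl_sp by blast
      have wj: "\<And>j. j \<in> {1..N} \<Longrightarrow> \<omega> \<in> cyl P (Xs j) (c j) (A j)" using w unfolding F_def by auto
      have wk: "\<omega> \<in> cyl P (Xs k0) ((m0-1)*T + r0) (ex_set S B ((m0-1)*T + r0))"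
        using wj[OF k0] unfolding c_def A_def by simp
      have "\<omega> \<in> Fp m0 k0 ((m0-1)*T + r0)"
        unfolding Fp_def
      proof (intro CollectI conjI sp m0 k0 wk ballI impI)
        show "(m0 - 1) * T + r0 \<le> m0 * Tpoll" using r0 m0 unfolding T_def
          by (cases m0) auto
        show "(N - 1) * (m0 - 1) * Tpoll + (k0 - 1) * Tpoll + ((m0 - 1) * T + r0) = t"
          unfolding teq0 T_def using N m0 by (cases N; cases m0) (auto simp: algebra_simps)
        fix j assume j: "j \<in> {1..N}"
        { assume "j < k0"
          then show "\<omega> \<in> cyl P (Xs j) (m0 * Tpoll) (\<lambda>_. S)" using wj[OF j] unfolding c_def A_def T_def by simp }
        { assume "2 \<le> m0"
          show "\<omega> \<in> cyl P (Xs j) ((m0 - 1) * Tpoll) (\<lambda>_. S)"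
          proof (cases "j < k0")
            case True
            then have "\<omega> \<in> cyl P (Xs j) (m0 * Tpoll) (\<lambda>_. S)" using wj[OF j] unfolding c_def A_def T_def by simp
            then show ?thesis by (rule cyl_mono_gt[rotated]) simp
          next
            case False
            show ?thesis
            proof (cases "j = k0")
              case True
              then have "exit_time S (\<lambda>n. Xs j n \<omega>) = enat ((m0-1)*T + r0)" using wk cyl_ex_iff by metis
              moreover have "(m0-1)*T < (m0-1)*T + r0" using r0 by simp
              ultimately show ?thesis unfolding cyl_gt_iff T_def using sp by simp
            next
              case False
              then show ?thesis using wj[OF j] \<open>\<not> j < k0\<close> unfolding c_def A_def T_def by simp
            qed
          qed }
      qed
      then show "\<omega> \<in> E" using memE by blast
    qed
    have EF: "E \<subseteq> F \<union> Z"
    proof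
      fix \<omega> assume "\<omega> \<in> E"
      then obtain m k s where w: "\<omega> \<in> Fp m k s" using memE by blast
      show "\<omega> \<in> F \<union> Z"
      proof (cases "\<omega> \<in> Z")
        case True then show ?thesis by simp
      next
        case nZ: False
        have s1: "1 \<le> s" using s_pos w nZ by blast
        have sp: "\<omega> \<in> space P" and m: "1 \<le> m" and k: "k \<in> {1..N}" and sm: "s \<le> m*T"
          and teq: "(N-1)*(m-1)*T + (k-1)*T + s = t"
          and wk: "\<omega> \<in> cyl P (Xs k) s (ex_set S B s)"
          and lt: "\<forall>j\<in>{1..N}. j < k \<longrightarrow> \<omega> \<in> cyl P (Xs j) (m*T) (\<lambda>_. S)"
          and prev: "2 \<le> m \<longrightarrow> (\<forall>j\<in>{1..N}. \<omega> \<in> cyl P (Xs j) ((m-1)*T) (\<lambda>_. S))"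
          using w unfolding Fp_def T_def by auto
        have sgt: "(m-1)*T < s"
        proof (cases "2 \<le> m")
          case True
          then have "\<omega> \<in> cyl P (Xs k) ((m-1)*T) (\<lambda>_. S)" using prev k by blast
          then have "enat ((m-1)*T) < exit_time S (\<lambda>n. Xs k n \<omega>)" unfolding cyl_gt_iff by simp
          moreover have "exit_time S (\<lambda>n. Xs k n \<omega>) = enat s" using wk cyl_ex_iff by metis
          ultimately show ?thesis by simp
        next
          case False then have "m = 1" using m by simp
          then show ?thesis using s1 by simp
        qed
        define r where "r = s - (m-1)*T"
        have r: "1 \<le> r" "r \<le> T" "s = (m-1)*T + r" unfolding r_def using sgt sm m
          by (cases m; auto simp: algebra_simps)+
        have t2: "t = N*(m-1)*T + (k-1)*T + r"
          using teq r(3) N m by (cases N; cases m) (auto simp: algebra_simps)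
        note ad = arith_decomp[OF T N m _ _ r(1,2) t2]
        have km: "1 \<le> k" "k \<le> N" using k by auto
        have eqs: "m0 = m" "k0 = k" "r0 = r"
          using ad[OF km] unfolding m0_def k0_def r0_def q_def by auto
        have "\<omega> \<in> F" unfolding F_def
        proof
          fix j assume j: "j \<in> {1..N}"
          show "\<omega> \<in> cyl P (Xs j) (c j) (A j)"
          proof (cases "j < k0")
            case True then show ?thesis using lt j unfolding c_def A_def eqs by simp
          next
            case False
            show ?thesis
            proof (cases "j = k0")
              case True then show ?thesis using wk r(3) unfolding c_def A_def eqs by simp
            next
              case False
              show ?thesis
              proof (cases "2 \<le> m")
                case True then show ?thesis using prev j False \<open>\<not> j < k0\<close> unfolding c_def A_def eqs by simp
              next
                case m1: False
                then have "m = 1" using m by simp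
                have "Xs j 0 \<omega> \<in> S" using notZ[OF sp nZ j] .
                then show ?thesis using sp False \<open>\<not> j < k0\<close> \<open>m = 1\<close> unfolding c_def A_def eqs cyl_def by simp
              qed
            qed
          qed
        qed
        then show ?thesis by simp
      qed
    qed
    have "measure P E = measure P F"
    proof (rule measure_eq_AE[OF _ E_sets F_sets])
      show "AE x in P. (x \<in> E) = (x \<in> F)"
        by (rule AE_I'[OF Z]) (use FE EF in auto)
    qed
    also have "\<dots> = (\<Prod>j\<in>{1..N}. measure P (cyl P (Xs j) (c j) (A j)))"
      unfolding F_def by (rule indep_cyl[OF ps replicas indep N A])
    also have "\<dots> = (\<Prod>j\<in>{1..N}. measure Q (cyl Q X (c j) (A j)))"
      by (intro prod.cong refl law_eq[OF replicas chain init' A]) auto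
    also have "\<dots> = measure Q (cyl Q X (c k0) (A k0)) * (\<Prod>j\<in>{1..N}-{k0}. measure Q (cyl Q X (c j) (\<lambda>_. S)))"
      using prod.remove[OF _ k0, of "\<lambda>j. measure Q (cyl Q X (c j) (A j))"]
      by (simp add: A_def)
    also have "(\<Prod>j\<in>{1..N}-{k0}. measure Q (cyl Q X (c j) (\<lambda>_. S))) = measure Q (cyl Q X (\<Sum>j\<in>{1..N}-{k0}. c j) (\<lambda>_. S))"
      by (rule prod_p[OF chain qsd S]) simp
    also have "(\<Sum>j\<in>{1..N}-{k0}. c j) = (k0-1)*(m0*T) + (N-k0)*((m0-1)*T)"
    proof -
      have split: "{1..N}-{k0} = {1..<k0} \<union> {k0<..N}" using k0 by auto
      have "(\<Sum>j\<in>{1..N}-{k0}. c j) = (\<Sum>j\<in>{1..<k0}. c j) + (\<Sum>j\<in>{k0<..N}. c j)"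
        unfolding split by (rule sum.union_disjoint) auto
      also have "(\<Sum>j\<in>{1..<k0}. c j) = (\<Sum>j\<in>{1..<k0}. m0*T)" by (intro sum.cong) (auto simp: c_def)
      also have "(\<Sum>j\<in>{k0<..N}. c j) = (\<Sum>j\<in>{k0<..N}. (m0-1)*T)" by (intro sum.cong) (auto simp: c_def)
      finally show ?thesis by simp
    qed
    also have "measure Q (cyl Q X (c k0) (A k0)) = measure Q (cyl Q X ((m0-1)*T) (\<lambda>_. S)) * measure Q (cyl Q X r0 (ex_set S B r0))"
      unfolding c_def A_def by (simp add: ex_mult[OF chain qsd S B r0(1)])
    also have "measure Q (cyl Q X (t) (ex_set S B t)) = measure Q (cyl Q X (N*(m0-1)*T + (k0-1)*T) (\<lambda>_. S)) * measure Q (cyl Q X r0 (ex_set S B r0))"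
      using ex_mult[OF chain qsd S B r0(1), of "N*(m0-1)*T + (k0-1)*T"] teq0 by simp
    moreover have "N*(m0-1)*T + (k0-1)*T = (m0-1)*T + ((k0-1)*(m0*T) + (N-k0)*((m0-1)*T))"
      using sum_ar[OF m0, of k0 N T] k0 by simp
    ultimately show ?thesis using p_add[OF chain qsd S, of "(m0-1)*T" "(k0-1)*(m0*T) + (N-k0)*((m0-1)*T)"]
      by (simp add: algebra_simps)
  qed
  show "measure P E = measure Q {\<omega>\<in>space Q. exit_time S (\<lambda>n. X n \<omega>) = enat t \<and> X t \<omega> \<in> B}"
    unfolding rhs main ..
qed

end
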